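(* Let $B$ be the set of irrational $x\in(0,1)$ whose $\bar O^1$-symbols are bounded, i.e. there exists $K_x\in\mathbb{N}$ with $g_k(x)\le K_x$ for all $k\in\mathbb{N}$. Then $\dim_H(B)=0$.
   Context: Every irrational $x\in(0,1)$ has a unique representation ($\bar O^1$-expansion) $$x=\sum_{k=1}^\infty\frac{(-1)^{k-1}}{g_1(g_1+g_2)\cdots(g_1+g_2+\dots+g_k)},\qquad g_k=g_k(x)\in\mathbb{N}=\{1,2,3,\dots\}.$$ The numbers $g_k(x)$ are called the $\bar O^1$-symbols of $x$. $\dim_H$ denotes Hausdorff dimension. *)

theory Defs
  imports "HOL-Analysis.Analysis"
begin

text \<open>Symbols are indexed from 0: g 0 = g_1, g 1 = g_2, ...
  The n-th term (n from 0) is (-1)^n / (S_0 * S_1 * ... * S_n) with S_j = g 0 + ... + g j.\<close>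

definition O1_term :: "(nat \<Rightarrow> nat) \<Rightarrow> nat \<Rightarrow> real" where
  "O1_term g n = (-1) ^ n / (\<Prod>j\<le>n. real (\<Sum>i\<le>j. g i))"

definition O1_expansion :: "real \<Rightarrow> (nat \<Rightarrow> nat) \<Rightarrow> bool" where
  "O1_expansion x g \<longleftrightarrow> (\<forall>k. g k \<ge> 1) \<and> (O1_term g sums x)"

definition O1_symbols :: "real \<Rightarrow> nat \<Rightarrow> nat" where
  "O1_symbols x = (THE g. O1_expansion x g)"

definition hd_weight :: "real \<Rightarrow> real set \<Rightarrow> ennreal" where
  "hd_weight s U = (if U = {} then 0 else if s = 0 then 1 else ennreal (diameter U powr s))"

definition hausdorff_pre :: "real \<Rightarrow> real \<Rightarrow> real set \<Rightarrow> ennreal" where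
  "hausdorff_pre s \<delta> A =
     (INF C \<in> {C :: nat \<Rightarrow> real set. A \<subseteq> (\<Union>i. C i) \<and> (\<forall>i. diameter (C i) \<le> \<delta>)}.
        (\<Sum>i. hd_weight s (C i)))"

definition hausdorff_measure :: "real \<Rightarrow> real set \<Rightarrow> ennreal" where
  "hausdorff_measure s A = (SUP \<delta> \<in> {0<..}. hausdorff_pre s \<delta> A)"

definition hausdorff_dim :: "real set \<Rightarrow> real" where
  "hausdorff_dim A = Inf {s. s \<ge> 0 \<and> hausdorff_measure s A = 0}"

end

theory Submission
  imports Defs
begin


primrec xs :: "real \<Rightarrow> nat \<Rightarrow> real" where
  "xs x 0 = x"
| "xs x (Suc k) = 1 - real_of_int \<lfloor>1 / xs x k\<rfloor> * xs x k"

definition MM :: "real \<Rightarrow> nat \<Rightarrow> nat" where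
  "MM x k = nat \<lfloor>1 / xs x k\<rfloor>"

definition GG :: "real \<Rightarrow> nat \<Rightarrow> nat" where
  "GG x k = (if k = 0 then MM x 0 else MM x k - MM x (k - 1))"

lemma aux_recip: "(0::real) < a \<Longrightarrow> 0 < t \<Longrightarrow> t < 1 / a \<Longrightarrow> a < 1 / t"
  by (simp add: field_simps)
lemma aux_floor: "real_of_int (m::int) + 1 < (z::real) \<Longrightarrow> m + 1 \<le> \<lfloor>z\<rfloor>"
  by linarith

lemma step_props:
  fixes y :: real
  assumes "0 < y" "y < 1" "y \<notin> \<rat>"
  defines "m \<equiv> \<lfloor>1 / y\<rfloor>"
  shows "m \<ge> 1" "real_of_int m * y < 1" "1 - real_of_int m * y < 1 / (real_of_int m + 1)"
        "0 < 1 - real_of_int m * y" "1 - real_of_int m * y \<notin> \<rat>"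
proof -
  have "1 / y > 1" using assms by simp
  then show m1: "m \<ge> 1" unfolding m_def by linarith
  have "1 / y \<noteq> real_of_int m"
  proof
    assume "1 / y = real_of_int m"
    moreover have "real_of_int m \<noteq> 0" using m1 by simp
    ultimately have "y = 1 / real_of_int m" using assms by (auto simp: field_simps)
    then have "y \<in> \<rat>" by simp
    then show False using assms by simp
  qed
  then have lt: "real_of_int m < 1 / y" unfolding m_def by linarith
  have lt2: "1 / y < real_of_int m + 1" unfolding m_def by linarith
  from lt show "real_of_int m * y < 1" using assms by (simp add: field_simps)
  then show "0 < 1 - real_of_int m * y" by simp
  from lt2 have "1 < (real_of_int m + 1) * y" using assms by (simp add: field_simps)
  then have "y > 1 / (real_of_int m + 1)" using m1 by (simp add: field_simps)
  then have "real_of_int m * (1 / (real_of_int m + 1)) < real_of_int m * y"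
    by (rule mult_strict_left_mono) (use m1 in simp)
  then have "real_of_int m * y > real_of_int m / (real_of_int m + 1)" by simp
  moreover have "1 - real_of_int m / (real_of_int m + 1) = 1 / (real_of_int m + 1)" using m1
    by (simp add: field_simps)
  ultimately show "1 - real_of_int m * y < 1 / (real_of_int m + 1)" by linarith
  show "1 - real_of_int m * y \<notin> \<rat>"
  proof
    assume h: "1 - real_of_int m * y \<in> \<rat>"
    have "y = (1 - (1 - real_of_int m * y)) / real_of_int m" using m1 by simp
    also have "\<dots> \<in> \<rat>" by (intro Rats_divide Rats_diff Rats_1 h) simp
    finally show False using assms by simp
  qed
qed

context
  fixes x :: real
  assumes x01: "0 < x" "x < 1" and xirr: "x \<notin> \<rat>"
begin

lemma xs_props: "0 < xs x k \<and> xs x k < 1 \<and> xs x k \<notin> \<rat>"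
proof (induction k)
  case 0 then show ?case using x01 xirr by simp
next
  case (Suc k)
  then have a: "0 < xs x k" "xs x k < 1" "xs x k \<notin> \<rat>" by auto
  note s = step_props[OF a]
  define m where "m = \<lfloor>1 / xs x k\<rfloor>"
  have m1: "real_of_int m \<ge> 1" using s(1) unfolding m_def by linarith
  have "1 / (real_of_int m + 1) \<le> 1" using m1 by (simp add: divide_le_eq)
  moreover have "xs x (Suc k) = 1 - real_of_int m * xs x k" by (simp add: m_def)
  moreover have "1 - real_of_int m * xs x k < 1 / (real_of_int m + 1)" using s(3) unfolding m_def .
  moreover have "0 < 1 - real_of_int m * xs x k" using s(4) unfolding m_def .
  moreover have "1 - real_of_int m * xs x k \<notin> \<rat>" using s(5) unfolding m_def .
  ultimately show ?case by auto
qed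

lemma MM_ge1: "MM x k \<ge> 1"
proof -
  have "1 \<le> \<lfloor>1 / xs x k\<rfloor>" by (rule step_props(1)) (use xs_props[of k] in auto)
  then show ?thesis unfolding MM_def by linarith
qed

lemma MM_real: "real (MM x k) = real_of_int \<lfloor>1 / xs x k\<rfloor>"
proof -
  have "1 \<le> \<lfloor>1 / xs x k\<rfloor>" by (rule step_props(1)) (use xs_props[of k] in auto)
  then have "0 \<le> \<lfloor>1 / xs x k\<rfloor>" by linarith
  then show ?thesis unfolding MM_def by (rule of_nat_nat)
qed

lemma xs_Suc: "xs x (Suc k) = 1 - real (MM x k) * xs x k"
  by (simp add: MM_real)

lemma xs_lt: "real (MM x k) * xs x k < 1"
  unfolding MM_real by (rule step_props(2)) (use xs_props[of k] in auto)

lemma MM_Suc: "MM x (Suc k) \<ge> MM x k + 1"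
proof -
  have a: "0 < xs x k" "xs x k < 1" "xs x k \<notin> \<rat>" using xs_props by auto
  have b: "xs x (Suc k) < 1 / (real (MM x k) + 1)"
    unfolding xs_Suc MM_real by (rule step_props(3)[OF a])
  have c: "xs x (Suc k) > 0" using xs_props[of "Suc k"] by blast
  have "real (MM x k) + 1 < 1 / xs x (Suc k)" by (rule aux_recip) (use b c in auto)
  then have "int (MM x k) + 1 \<le> \<lfloor>1 / xs x (Suc k)\<rfloor>" by (intro aux_floor) simp
  then show ?thesis unfolding MM_def[of x "Suc k"] by (simp add: le_nat_iff)
qed

lemma MM_mono: "i \<le> j \<Longrightarrow> MM x i \<le> MM x j"
proof (induction j rule: dec_induct)
  case base then show ?case by simp
next
  case (step n) then show ?case using MM_Suc[of n] by linarith
qed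

lemma MM_ge: "MM x k \<ge> k + 1"
proof (induction k)
  case 0 then show ?case using MM_ge1[of 0] by simp
next
  case (Suc n) then show ?case using MM_Suc[of n] by linarith
qed

lemma GG_sum: "(\<Sum>i\<le>j. GG x i) = MM x j"
proof (induction j)
  case 0 then show ?case by (simp add: GG_def)
next
  case (Suc j) then show ?case using MM_Suc[of j] by (simp add: GG_def)
qed

lemma GG_ge1: "GG x k \<ge> 1"
  using MM_ge1 MM_Suc[of "k - 1"] by (cases k) (auto simp: GG_def)

lemma O1_term_GG: "O1_term (GG x) n = (-1)^n / (\<Prod>j\<le>n. real (MM x j))"
  by (simp add: O1_term_def GG_sum)

lemma identity:
  "x = (\<Sum>n<N. O1_term (GG x) n) + (-1)^N * xs x N / (\<Prod>j<N. real (MM x j))"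
proof (induction N)
  case 0 then show ?case by simp
next
  case (Suc N)
  have pos: "\<And>j. 0 < real (MM x j)" using MM_ge1 by (simp add: Suc_le_eq)
  have P: "(\<Prod>j<N. real (MM x j)) > 0" using pos by (simp add: prod_pos)
  have M: "real (MM x N) > 0" using MM_ge1[of N] by simp
  have e: "(-1)^N * xs x N / (\<Prod>j<N. real (MM x j)) =
     O1_term (GG x) N + (-1)^Suc N * xs x (Suc N) / (\<Prod>j<Suc N. real (MM x j))"
  proof -
    have p1: "(\<Prod>j\<le>N. real (MM x j)) = (\<Prod>j<N. real (MM x j)) * real (MM x N)"
      by (simp add: lessThan_Suc_atMost[symmetric])
    have p2: "(\<Prod>j<Suc N. real (MM x j)) = (\<Prod>j<N. real (MM x j)) * real (MM x N)"
      by simp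
    have aux: "\<And>(s::real) t P a. a \<noteq> 0 \<Longrightarrow> P \<noteq> 0 \<Longrightarrow>
        s * t / P = s / (P * a) + (-1 * s) * (1 - a * t) / (P * a)"
      by (simp add: field_simps)
    show ?thesis unfolding O1_term_GG xs_Suc p1 p2 power_Suc
      by (rule aux) (use P M in linarith)+
  qed
  show ?case using Suc e by simp
qed

lemma remainder_bound: "\<bar>(-1)^N * xs x N / (\<Prod>j<N. real (MM x j))\<bar> \<le> 1 / fact N"
proof -
  have P: "(\<Prod>j<N. real (MM x j)) \<ge> fact N"
  proof -
    have "fact N = (\<Prod>j<N. real (j + 1))"
      by (simp add: fact_prod_Suc atLeast0LessThan)
    also have "\<dots> \<le> (\<Prod>j<N. real (MM x j))"
    proof (intro prod_mono conjI)
      fix i show "0 \<le> real (i + 1)" by simp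
      show "real (i + 1) \<le> real (MM x i)" using MM_ge[of i] by linarith
    qed
    finally show ?thesis .
  qed
  have "xs x N \<le> 1" using xs_props[of N] by simp
  moreover have "xs x N \<ge> 0" using xs_props[of N] by simp
  ultimately have "\<bar>(-1)^N * xs x N / (\<Prod>j<N. real (MM x j))\<bar> = xs x N / (\<Prod>j<N. real (MM x j))"
    using P by (simp add: abs_mult power_abs abs_of_pos[OF less_le_trans[OF fact_gt_zero P]])
  also have "\<dots> \<le> 1 / (\<Prod>j<N. real (MM x j))"
    using P \<open>xs x N \<le> 1\<close> less_le_trans[OF fact_gt_zero P] by (intro divide_right_mono) auto
  also have "\<dots> \<le> 1 / fact N" using P less_le_trans[OF fact_gt_zero P]
    by (intro divide_left_mono) (auto intro: mult_pos_pos)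
  finally show ?thesis .
qed

lemma GG_expansion: "O1_expansion x (GG x)"
  unfolding O1_expansion_def
proof
  show "\<forall>k. 1 \<le> GG x k" using GG_ge1 by auto
  have "(\<lambda>N. (-1)^N * xs x N / (\<Prod>j<N. real (MM x j))) \<longlonglongrightarrow> 0"
  proof (rule Lim_null_comparison)
    show "\<forall>\<^sub>F N in sequentially. norm ((-1)^N * xs x N / (\<Prod>j<N. real (MM x j))) \<le> 1 / fact N"
      using remainder_bound by simp
    show "(\<lambda>N. 1 / fact N :: real) \<longlonglongrightarrow> 0"
      using summable_LIMSEQ_zero[OF summable_exp[of 1]] by (simp add: divide_inverse)
  qed
  then have "(\<lambda>N. x - (-1)^N * xs x N / (\<Prod>j<N. real (MM x j))) \<longlonglongrightarrow> x - 0"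
    by (intro tendsto_diff) auto
  moreover have eq: "\<And>N. (\<Sum>n<N. O1_term (GG x) n) = x - (-1)^N * xs x N / (\<Prod>j<N. real (MM x j))"
    using identity by (metis add_diff_cancel_right')
  ultimately have "(\<lambda>N. \<Sum>n<N. O1_term (GG x) n) \<longlonglongrightarrow> x"
    by (simp only: eq) simp
  then show "O1_term (GG x) sums x" by (simp add: sums_def)
qed

end


definition valid :: "(nat \<Rightarrow> nat) \<Rightarrow> bool" where "valid g \<longleftrightarrow> (\<forall>k. g k \<ge> 1)"

definition SS :: "(nat \<Rightarrow> nat) \<Rightarrow> nat \<Rightarrow> real" where "SS g j = real (\<Sum>i\<le>j. g i)"

lemma SS_ge: "valid g \<Longrightarrow> SS g j \<ge> real j + 1"
proof -
  assume v: "valid g"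
  have "(\<Sum>i\<le>j. (1::nat)) \<le> (\<Sum>i\<le>j. g i)" using v unfolding valid_def by (intro sum_mono) auto
  then have "j + 1 \<le> (\<Sum>i\<le>j. g i)" by simp
  then have "real (j + 1) \<le> real (\<Sum>i\<le>j. g i)" by (simp only: of_nat_le_iff)
  then show ?thesis unfolding SS_def by (simp only: of_nat_add of_nat_1)
qed

definition cc :: "(nat \<Rightarrow> nat) \<Rightarrow> nat \<Rightarrow> real" where "cc g n = 1 / (\<Prod>j\<le>n. SS g j)"

lemma O1_term_cc: "O1_term g n = (-1)^n * cc g n"
  by (simp add: O1_term_def cc_def SS_def)

lemma prodSS_ge: "valid g \<Longrightarrow> (\<Prod>j\<le>n. SS g j) \<ge> real n + 1"
proof (induction n)
  case 0 then show ?case using SS_ge[of g 0] by simp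
next
  case (Suc n)
  have e: "(\<Prod>j\<le>Suc n. SS g j) = (\<Prod>j\<le>n. SS g j) * SS g (Suc n)" by simp
  have S: "SS g (Suc n) \<ge> real n + 2" using SS_ge[OF Suc.prems, of "Suc n"] by simp
  have P: "(\<Prod>j\<le>n. SS g j) \<ge> 1" using Suc by simp
  have "1 * SS g (Suc n) \<le> (\<Prod>j\<le>n. SS g j) * SS g (Suc n)"
    by (rule mult_right_mono[OF P]) (use S in simp)
  then have "SS g (Suc n) \<le> (\<Prod>j\<le>Suc n. SS g j)" using e by linarith
  then show ?case using S unfolding of_nat_Suc by linarith
qed

lemma cc_pos: "valid g \<Longrightarrow> cc g n > 0"
proof -
  assume v: "valid g"
  have "(\<Prod>j\<le>n. SS g j) \<ge> real n + 1" by (rule prodSS_ge[OF v])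
  then have "(\<Prod>j\<le>n. SS g j) > 0" using of_nat_0_le_iff[of n] by linarith
  then show ?thesis unfolding cc_def by simp
qed

lemma cc_Suc: "valid g \<Longrightarrow> cc g (Suc n) = cc g n / SS g (Suc n)"
  unfolding cc_def by simp

lemma cc_mono: "valid g \<Longrightarrow> cc g (Suc n) \<le> cc g n"
proof -
  assume v: "valid g"
  have "SS g (Suc n) \<ge> 1" using SS_ge[OF v, of "Suc n"] by simp
  then show ?thesis using cc_pos[OF v, of n] cc_Suc[OF v, of n]
    by (simp add: divide_le_eq)
qed

lemma cc_strict: "valid g \<Longrightarrow> cc g (Suc (Suc n)) < cc g (Suc n)"
proof -
  assume v: "valid g"
  have "SS g (Suc (Suc n)) > 1" using SS_ge[OF v, of "Suc (Suc n)"] by simp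
  then show ?thesis using cc_pos[OF v, of "Suc n"] cc_Suc[OF v, of "Suc n"]
    by (simp add: divide_less_eq)
qed

lemma cc_lim: "valid g \<Longrightarrow> cc g \<longlonglongrightarrow> 0"
proof -
  assume v: "valid g"
  show ?thesis
  proof (rule Lim_null_comparison)
    show "\<forall>\<^sub>F n in sequentially. norm (cc g n) \<le> inverse (real (Suc n))"
    proof (intro always_eventually allI)
      fix n
      have "cc g n \<le> 1 / (real n + 1)" unfolding cc_def using prodSS_ge[OF v, of n]
        by (intro divide_left_mono) auto
      then show "norm (cc g n) \<le> inverse (real (Suc n))"
        using cc_pos[OF v, of n] by (simp add: divide_inverse add.commute)
    qed
    show "(\<lambda>n. inverse (real (Suc n))) \<longlonglongrightarrow> 0" by (rule LIMSEQ_inverse_real_of_nat)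
  qed
qed

lemma aux_ab: "(a::real) > 0 \<Longrightarrow> 1 / a - (1 / a) / (a + 1) = 1 / (a + 1)"
proof -
  assume a: "a > 0"
  have "a + a * a > 0" using a by (simp add: add_pos_pos)
  then show ?thesis using a by (simp add: field_simps)
qed

lemma bounds:
  assumes v: "valid g" and s: "O1_term g sums y"
  shows "1 / (real (g 0) + 1) < y" "y \<le> 1 / real (g 0)"
proof -
  note L = summable_Leibniz'[OF cc_lim[OF v] less_imp_le[OF cc_pos[OF v]] cc_mono[OF v]]
  have "O1_term g = (\<lambda>i. (-1)^i * cc g i)" by (rule ext) (rule O1_term_cc)
  then have y: "y = (\<Sum>i. (-1)^i * cc g i)" using sums_unique[OF s] by simp
  have g0: "real (g 0) \<ge> 1" using v unfolding valid_def by (metis of_nat_1 of_nat_le_iff)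
  have c0: "cc g 0 = 1 / real (g 0)" by (simp add: cc_def SS_def)
  have c1: "cc g 1 = cc g 0 / SS g 1" using cc_Suc[OF v, of 0] by simp
  have S1: "SS g 1 \<ge> real (g 0) + 1"
  proof -
    have "SS g 1 = real (g 0) + real (g 1)" by (simp add: SS_def)
    then show ?thesis using v unfolding valid_def by (metis add_le_cancel_left of_nat_1 of_nat_le_iff)
  qed
  have "cc g 1 \<le> (1 / real (g 0)) / (real (g 0) + 1)"
    unfolding c1 c0 using S1 g0 by (intro divide_left_mono) auto
  then have "cc g 0 - cc g 1 \<ge> 1 / real (g 0) - (1 / real (g 0)) / (real (g 0) + 1)"
    unfolding c0 by linarith
  moreover have "1 / real (g 0) - (1 / real (g 0)) / (real (g 0) + 1) = 1 / (real (g 0) + 1)"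
    by (rule aux_ab) (use g0 in linarith)
  ultimately have A: "cc g 0 - cc g 1 \<ge> 1 / (real (g 0) + 1)" by linarith
  have "(\<Sum>i<2*2. (-1)^i * cc g i) \<le> y" using L(2)[of 2] y by simp
  moreover have "(\<Sum>i<2*2. (-1)^i * cc g i) = cc g 0 - cc g 1 + (cc g 2 - cc g 3)"
    by (simp add: numeral_eq_Suc)
  moreover have "cc g 3 < cc g 2" using cc_strict[OF v, of 1] by (simp add: numeral_eq_Suc)
  ultimately show "1 / (real (g 0) + 1) < y" using A by linarith
  have "y \<le> (\<Sum>i<2*0+1. (-1)^i * cc g i)" using L(4)[of 0] y by simp
  then show "y \<le> 1 / real (g 0)" using c0 by simp
qed

lemma first_digit:
  assumes v: "valid g" and s: "O1_term g sums y"
  shows "g 0 = nat \<lfloor>1 / y\<rfloor>"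
proof -
  note b = bounds[OF v s]
  have g0: "real (g 0) \<ge> 1" using v unfolding valid_def by (metis of_nat_1 of_nat_le_iff)
  have "1 / (real (g 0) + 1) > 0" by simp
  then have ypos: "y > 0" using b(1) by linarith
  have "real (g 0) \<le> 1 / y" using b(2) ypos g0 by (simp add: field_simps)
  moreover have "1 / y < real (g 0) + 1" using b(1) ypos g0 by (simp add: field_simps)
  ultimately have "\<lfloor>1 / y\<rfloor> = int (g 0)" by (simp add: floor_eq_iff)
  then show ?thesis by simp
qed

definition mg :: "(nat \<Rightarrow> nat) \<Rightarrow> nat \<Rightarrow> nat" where
  "mg g k = (if k = 0 then g 0 + g 1 else g (Suc k))"

lemma mg_valid: "valid g \<Longrightarrow> valid (mg g)"
  unfolding valid_def mg_def by (auto simp: trans_le_add1)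

lemma mg_sum: "(\<Sum>i\<le>j. mg g i) = (\<Sum>i\<le>Suc j. g i)"
  by (induction j) (auto simp: mg_def)

lemma O1_term_Suc: "valid g \<Longrightarrow> O1_term (mg g) n = - real (g 0) * O1_term g (Suc n)"
proof -
  assume v: "valid g"
  have g0: "real (g 0) \<ge> 1" using v unfolding valid_def by (metis of_nat_1 of_nat_le_iff)
  have "(\<Prod>j\<le>Suc n. real (\<Sum>i\<le>j. g i)) = real (g 0) * (\<Prod>j\<le>n. real (\<Sum>i\<le>Suc j. g i))"
    by (subst prod.atMost_shift) (simp add: lessThan_Suc_atMost)
  moreover have aux: "\<And>(a::real) c P. a \<noteq> 0 \<Longrightarrow> c / P = - a * ((- c) / (a * P))"
    by (simp add: field_simps)
  moreover have "real (g 0) \<noteq> 0" using g0 by simp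
  ultimately show ?thesis unfolding O1_term_def mg_sum power_Suc
    by (metis mult_minus1)
qed

lemma mg_sums: "valid g \<Longrightarrow> O1_term g sums y \<Longrightarrow> O1_term (mg g) sums (1 - real (g 0) * y)"
proof -
  assume v: "valid g" and s: "O1_term g sums y"
  have g0: "real (g 0) \<ge> 1" using v unfolding valid_def by (metis of_nat_1 of_nat_le_iff)
  have t0: "O1_term g 0 = 1 / real (g 0)" by (simp add: O1_term_def)
  have "(\<lambda>n. O1_term g (Suc n)) sums (y - O1_term g 0)"
    using s by (subst sums_Suc_iff) simp
  then have "(\<lambda>n. - real (g 0) * O1_term g (Suc n)) sums (- real (g 0) * (y - O1_term g 0))"
    by (rule sums_mult)
  moreover have "- real (g 0) * (y - O1_term g 0) = 1 - real (g 0) * y" using g0 t0 by (simp add: field_simps)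
  moreover have "O1_term (mg g) = (\<lambda>n. - real (g 0) * O1_term g (Suc n))"
    by (rule ext) (rule O1_term_Suc[OF v])
  ultimately show ?thesis by simp
qed

lemma unique_digits:
  "valid g \<Longrightarrow> valid h \<Longrightarrow> O1_term g sums y \<Longrightarrow> O1_term h sums y \<Longrightarrow> g n = h n"
proof (induction n arbitrary: g h y)
  case 0 then show ?case using first_digit[OF "0.prems"(1,3)] first_digit[OF "0.prems"(2,4)] by simp
next
  case (Suc n)
  have e0: "g 0 = h 0" using first_digit[OF Suc.prems(1,3)] first_digit[OF Suc.prems(2,4)] by simp
  have "mg g n = mg h n"
    using Suc.IH[OF mg_valid[OF Suc.prems(1)] mg_valid[OF Suc.prems(2)]
        mg_sums[OF Suc.prems(1,3)]] mg_sums[OF Suc.prems(2,4)] e0 by simp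
  then show ?case using e0 by (cases n) (auto simp: mg_def)
qed

lemma symbols_eq:
  assumes "0 < x" "x < 1" "x \<notin> \<rat>"
  shows "O1_symbols x = GG x"
  unfolding O1_symbols_def
proof (rule the_equality)
  show "O1_expansion x (GG x)" by (rule GG_expansion[OF assms])
  fix g assume "O1_expansion x g"
  then have v: "valid g" "O1_term g sums x" unfolding O1_expansion_def valid_def by auto
  have w: "valid (GG x)" "O1_term (GG x) sums x"
    using GG_expansion[OF assms] unfolding O1_expansion_def valid_def by auto
  show "g = GG x"
    by (rule ext) (rule unique_digits[OF v(1) w(1) v(2) w(2)])
qed



lemma choose_N:
  fixes s \<delta> b :: real
  assumes s: "s > 0" and d: "\<delta> > 0" and b: "b > 0"
  shows "\<exists>N. 2 / fact N \<le> \<delta> \<and> real (K ^ N) * (2 / fact N) powr s \<le> b"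
proof -
  define q where "q = (real K + 1) powr (1 / s)"
  have q1: "q \<ge> 1" unfolding q_def by (rule ge_one_powr_ge_zero) (use s in auto)
  have lim: "(\<lambda>N. 2 * (inverse (fact N) * q ^ N)) \<longlonglongrightarrow> 2 * 0"
    by (intro tendsto_mult tendsto_const summable_LIMSEQ_zero[OF summable_exp])
  have m: "min \<delta> (b powr (1 / s)) > 0" using d b by simp
  have "eventually (\<lambda>N. dist (2 * (inverse (fact N) * q ^ N)) (2 * 0) < min \<delta> (b powr (1 / s))) sequentially"
    using lim m unfolding tendsto_iff by blast
  then obtain N where N0: "dist (2 * (inverse (fact N) * q ^ N)) (2 * 0) < min \<delta> (b powr (1 / s))"
    by (auto simp: eventually_sequentially)
  then have N: "\<bar>2 * (inverse (fact N) * q ^ N)\<bar> < min \<delta> (b powr (1 / s))"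
    by (simp add: dist_real_def)
  define a where "a = 2 * q ^ N / fact N"
  have a0: "a \<ge> 0" unfolding a_def using q1 by simp
  have a: "a < \<delta>" "a < b powr (1 / s)" "a \<ge> 0" using N a0 unfolding a_def
    by (auto simp: divide_inverse mult_ac)
  have qN: "q ^ N \<ge> 1" using q1 by (simp add: one_le_power)
  have "2 / fact N \<le> a" unfolding a_def using qN
    by (simp add: divide_right_mono)
  then have A: "2 / fact N \<le> \<delta>" using a by linarith
  have K1: "real K + 1 \<noteq> 0" by simp
  have e1: "(q ^ N) powr s = (real K + 1) ^ N"
  proof -
    have "(q ^ N) powr s = ((real K + 1) powr (real N * (1 / s))) powr s"
      unfolding q_def by (simp add: powr_power[OF K1])
    also have "\<dots> = (real K + 1) powr (real N)" using s by (simp add: powr_powr)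
    also have "\<dots> = (real K + 1) ^ N" by (simp add: powr_realpow add_pos_nonneg)
    finally show ?thesis .
  qed
  have "real (K ^ N) \<le> (real K + 1) ^ N" by (simp add: power_mono)
  then have "real (K ^ N) * (2 / fact N) powr s \<le> (real K + 1) ^ N * (2 / fact N) powr s"
    by (intro mult_right_mono) auto
  also have "\<dots> = a powr s" unfolding a_def e1[symmetric] powr_mult[symmetric] by (simp add: mult.commute)
  also have "\<dots> \<le> (b powr (1 / s)) powr s" using a s by (intro powr_mono2) auto
  also have "\<dots> = b" using s b by (simp add: powr_powr)
  finally show ?thesis using A by blast
qed

definition ps :: "nat \<Rightarrow> (nat \<Rightarrow> nat) \<Rightarrow> real" where
  "ps N p = (\<Sum>n<N. O1_term p n)"

lemma O1_term_restrict: "n < N \<Longrightarrow> O1_term (restrict g {..<N}) n = O1_term g n"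
  unfolding O1_term_def
  by (intro arg_cong2[where f = "(/)"] refl prod.cong arg_cong[where f = real] sum.cong) auto

lemma near:
  assumes "0 < x" "x < 1" "x \<notin> \<rat>"
  shows "\<bar>x - ps N (restrict (GG x) {..<N})\<bar> \<le> 1 / fact N"
proof -
  have "ps N (restrict (GG x) {..<N}) = (\<Sum>n<N. O1_term (GG x) n)"
    unfolding ps_def by (intro sum.cong) (auto simp: O1_term_restrict)
  then have "x - ps N (restrict (GG x) {..<N}) = (-1)^N * xs x N / (\<Prod>j<N. real (MM x j))"
    using identity[OF assms, of N] by linarith
  then show ?thesis using remainder_bound[OF assms, of N] by simp
qed

lemma sum_if_bound: "(w::real) \<ge> 0 \<Longrightarrow> (\<Sum>j<n. if j < c then w else 0) = real (min n c) * w"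
  by (induction n) (auto simp: min_def algebra_simps)

lemma geom_half: "(\<Sum>K<n. (1/2::real) ^ Suc K) = 1 - (1/2) ^ n"
  by (induction n) (auto simp: algebra_simps)



definition BB :: "real set" where
  "BB = {x :: real. x \<in> {0<..<1} \<and> x \<notin> \<rat> \<and> (\<exists>K :: nat. \<forall>k. O1_symbols x k \<le> K)}"

lemma pre_small:
  fixes s \<delta> e :: real
  assumes s: "s > 0" and d: "\<delta> > 0" and e: "e > 0"
  shows "hausdorff_pre s \<delta> BB \<le> ennreal e"
proof -
  have "\<forall>K. \<exists>N. 2 / fact N \<le> \<delta> \<and> real (K ^ N) * (2 / fact N) powr s \<le> e * (1/2) ^ Suc K"
    by (intro allI choose_N[OF s d]) (use e in simp)
  then obtain NN where NN: "\<And>K. 2 / fact (NN K) \<le> \<delta>"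
     "\<And>K. real (K ^ NN K) * (2 / fact (NN K)) powr s \<le> e * (1/2) ^ Suc K"
    by metis
  define F where "F K = PiE {..<NN K} (\<lambda>_. {1..K::nat})" for K
  have finF: "finite (F K)" for K unfolding F_def by (intro finite_PiE) auto
  have cardF: "card (F K) = K ^ NN K" for K unfolding F_def by (simp add: card_PiE)
  have "\<forall>K. \<exists>h. bij_betw h {0..<card (F K)} (F K)"
    using ex_bij_betw_nat_finite finF by blast
  then obtain en where en: "\<And>K. bij_betw (en K) {0..<card (F K)} (F K)" by metis
  define r :: "nat \<Rightarrow> real" where "r K = 1 / fact (NN K)" for K
  define D where "D K j = (if j < card (F K) then {ps (NN K) (en K j) - r K .. ps (NN K) (en K j) + r K} else {})" for K j
  define C where "C i = D (fst (prod_decode i)) (snd (prod_decode i))" for i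
  define h where "h K j = (if j < card (F K) then (2 / fact (NN K)) powr s else 0)" for K j
  have rpos: "r K > 0" for K unfolding r_def by simp
  have diamD: "diameter (D K j) \<le> \<delta>" for K j
  proof (cases "j < card (F K)")
    case True
    then have "diameter (D K j) = 2 / fact (NN K)" unfolding D_def using rpos[of K]
      by (simp add: r_def)
    then show ?thesis using NN(1) by simp
  next
    case False then show ?thesis unfolding D_def using d by simp
  qed
  have wD: "hd_weight s (D K j) = ennreal (h K j)" for K j
  proof (cases "j < card (F K)")
    case True
    then have "diameter (D K j) = 2 / fact (NN K)" unfolding D_def using rpos[of K]
      by (simp add: r_def)
    moreover have "D K j \<noteq> {}" using True rpos[of K] unfolding D_def by auto
    ultimately show ?thesis using True s unfolding hd_weight_def h_def by simp
  next
    case False then show ?thesis unfolding D_def hd_weight_def h_def by simp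
  qed
  have hnn: "h K j \<ge> 0" for K j unfolding h_def by simp
  have cover: "BB \<subseteq> (\<Union>i. C i)"
  proof
    fix x assume "x \<in> BB"
    then have x: "0 < x" "x < 1" "x \<notin> \<rat>" and "\<exists>K. \<forall>k. O1_symbols x k \<le> K"
      unfolding BB_def by auto
    then obtain K where K: "\<And>k. GG x k \<le> K" using symbols_eq[OF x] by auto
    define p where "p = restrict (GG x) {..<NN K}"
    have "p \<in> F K" unfolding p_def F_def using K GG_ge1[OF x] by auto
    moreover have "en K ` {0..<card (F K)} = F K" using en[of K] unfolding bij_betw_def by blast
    ultimately obtain j where j: "j \<in> {0..<card (F K)}" "en K j = p"
      by (metis imageE)
    have "x \<in> D K j" using near[OF x, of "NN K"] j unfolding D_def p_def r_def
      by (auto simp: abs_le_iff)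
    then have "x \<in> C (prod_encode (K, j))" unfolding C_def by simp
    then show "x \<in> (\<Union>i. C i)" by blast
  qed
  have diamC: "\<forall>i. diameter (C i) \<le> \<delta>" unfolding C_def using diamD by simp
  have part: "(\<Sum>i<n. h (fst (prod_decode i)) (snd (prod_decode i))) \<le> e" for n
  proof -
    have "(\<Sum>i<n. h (fst (prod_decode i)) (snd (prod_decode i)))
        = (\<Sum>pr\<in>prod_decode ` {..<n}. h (fst pr) (snd pr))"
      by (subst sum.reindex) (auto simp: inj_prod_decode)
    also have "\<dots> \<le> (\<Sum>pr\<in>{..<n} \<times> {..<n}. h (fst pr) (snd pr))"
    proof (rule sum_mono2)
      show "prod_decode ` {..<n} \<subseteq> {..<n} \<times> {..<n}"
      proof
        fix pr assume "pr \<in> prod_decode ` {..<n}"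
        then obtain i where i: "i < n" "pr = prod_decode i" by auto
        obtain a b where ab: "pr = (a, b)" by (cases pr)
        have "a \<le> prod_encode (a, b)" by (rule le_prod_encode_1)
        moreover have "b \<le> prod_encode (a, b)" by (rule le_prod_encode_2)
        moreover have "prod_encode (a, b) = i" using i ab by (metis prod_decode_inverse)
        ultimately have "a < n" "b < n" using i by auto
        then show "pr \<in> {..<n} \<times> {..<n}" using ab by simp
      qed
    qed (auto simp: hnn)
    also have "\<dots> = (\<Sum>K<n. \<Sum>j<n. h K j)"
      by (simp add: sum.cartesian_product case_prod_beta)
    also have "\<dots> \<le> (\<Sum>K<n. e * (1/2) ^ Suc K)"
    proof (rule sum_mono)
      fix K
      have "(\<Sum>j<n. h K j) = real (min n (card (F K))) * (2 / fact (NN K)) powr s"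
        unfolding h_def by (rule sum_if_bound) simp
      also have "\<dots> \<le> real (card (F K)) * (2 / fact (NN K)) powr s"
        by (intro mult_right_mono) auto
      also have "\<dots> \<le> e * (1/2) ^ Suc K" using NN(2)[of K] cardF[of K] by simp
      finally show "(\<Sum>j<n. h K j) \<le> e * (1/2) ^ Suc K" .
    qed
    also have "\<dots> = e * (\<Sum>K<n. (1/2::real) ^ Suc K)" by (rule sum_distrib_left[symmetric])
    also have "\<dots> = e * (1 - (1/2) ^ n)" by (simp only: geom_half)
    also have "\<dots> \<le> e" using e by (simp add: mult_left_le)
    finally show ?thesis .
  qed
  define w where "w i = h (fst (prod_decode i)) (snd (prod_decode i))" for i
  have wnn: "\<And>i. w i \<ge> 0" unfolding w_def using hnn by simp
  have summ: "summable w" by (rule summableI_nonneg_bounded[OF wnn]) (use part in \<open>simp add: w_def\<close>)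
  have sle: "suminf w \<le> e" by (rule suminf_le_const[OF summ]) (use part in \<open>simp add: w_def\<close>)
  have "(\<Sum>i. hd_weight s (C i)) = (\<Sum>i. ennreal (w i))"
    unfolding C_def w_def wD by simp
  also have "\<dots> = ennreal (suminf w)" by (rule suminf_ennreal2[OF wnn summ])
  also have "\<dots> \<le> ennreal e" using sle by (rule ennreal_leI)
  finally have sumle: "(\<Sum>i. hd_weight s (C i)) \<le> ennreal e" .
  show ?thesis unfolding hausdorff_pre_def
    by (rule INF_lower2[where i = C]) (use cover diamC sumle in auto)
qed

lemma pre_zero:
  fixes s \<delta> :: real
  assumes s: "s > 0" and d: "\<delta> > 0"
  shows "hausdorff_pre s \<delta> BB = 0"
proof -
  have "hausdorff_pre s \<delta> BB \<le> 0"
  proof (rule ennreal_le_epsilon)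
    fix e :: real assume "0 < e"
    then show "hausdorff_pre s \<delta> BB \<le> 0 + ennreal e" using pre_small[OF s d] by simp
  qed
  then show ?thesis by simp
qed

lemma measure_zero: "s > 0 \<Longrightarrow> hausdorff_measure s BB = 0"
  unfolding hausdorff_measure_def using pre_zero by simp

lemma dim_zero: "hausdorff_dim BB = 0"
proof -
  let ?S = "{s. s \<ge> 0 \<and> hausdorff_measure s BB = 0}"
  have sub: "{0<..} \<subseteq> ?S" using measure_zero by auto
  have bdd: "bdd_below ?S" by (rule bdd_belowI[where m = 0]) auto
  have "(1::real) \<in> ?S" using measure_zero[of 1] by simp
  then have ne: "?S \<noteq> {}" by blast
  have ge: "Inf ?S \<ge> 0" by (rule cInf_greatest[OF ne]) auto
  have le: "Inf ?S \<le> t" if "t > 0" for t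
    by (rule cInf_lower[OF _ bdd]) (use sub that in auto)
  have "Inf ?S \<le> 0"
  proof (rule ccontr)
    assume "\<not> Inf ?S \<le> 0"
    then have "Inf ?S > 0" by simp
    then have "Inf ?S \<le> Inf ?S / 2" using le[of "Inf ?S / 2"] by simp
    then show False using \<open>Inf ?S > 0\<close> by simp
  qed
  then show ?thesis unfolding hausdorff_dim_def using ge by simp
qed


theorem corollary1:
  shows "hausdorff_dim {x :: real. x \<in> {0<..<1} \<and> x \<notin> \<rat> \<and>
            (\<exists>K :: nat. \<forall>k. O1_symbols x k \<le> K)} = 0"
  using dim_zero unfolding BB_def .

end
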